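(* For every type $\lambda$ of degree $d$, $$H_\lambda=\sum_{\tau}a(\tau,\lambda)\,M_\tau,\qquad E^+_\lambda=\sum_\tau e(\tau,\lambda)\,M_\tau,$$ the sums over all types $\tau$ of degree $d$, where $a(\tau,\lambda)$ is the number of arrangements of $\tau$ into $\lambda$ and $e(\tau,\lambda)$ the number of such arrangements with all entries in $\{0,1\}$. Moreover $a(\tau,\lambda)=a(\lambda^t,\tau^t)$ and $e(\tau,\lambda)=e(\lambda^t,\tau^t)$, the equalities being realized by the bijection $A\mapsto A^T$ on arrangements.
   Context: Let $x_{ij}$ ($i,j\ge1$) be indeterminates with $x_{ij}$ of degree $i$. The ring $\mathrm{PS}_{\mathbb Z}$ of polysymmetric functions is the ring of formal sums of monomials in the $x_{ij}$ of bounded degree with integer coefficients that are invariant under all permutations of the index set $\mathbb N_{>0}^2$ preserving the first coordinate. A type of degree $d$ is a finite multiset of pairs $(b,m)$ of positive integers with $\sum bm=d$; its transpose $\tau^t$ replaces each $(b,m)$ by $(m,b)$. A monomial $x_{i_1j_1}^{m_1}\cdots x_{i_rj_r}^{m_r}$ with distinct variables and $m_k\ge1$ has type $\{(i_1,m_1),\dots,(i_r,m_r)\}$; $M_\tau$ is the sum of all monomials of type $\tau$. $H_d$ is the sum of all monomials of degree $d$ and $E^+_d$ the sum of all squarefree monomials of degree $d$; for a type $\lambda$, $H_\lambda=\prod_{(d,m)\in\lambda}H_d(x_{**}^m)$ and $E^+_\lambda=\prod_{(d,m)\in\lambda}E^+_d(x_{**}^m)$, where $f(x_{**}^m)$ means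 substituting $x_{ij}\mapsto x_{ij}^m$. For types $\tau=\{(b_1,m_1),\dots,(b_r,m_r)\}$ and $\lambda=\{(c_1,n_1),\dots,(c_s,n_s)\}$ (in fixed orderings), an arrangement of $\tau$ into $\lambda$ is an $r\times s$ non-negative integer matrix $A$ with $A\vec n=\vec m$ and $A^T\vec b=\vec c$. *)

theory Defs
  imports Main "HOL-Library.Poly_Mapping" "HOL-Library.Multiset" "HOL-Library.Product_Lexorder"
begin

text \<open>Monomials in the variables x_ij: finitely supported exponent functions on index pairs.
  Only monomials whose variables have both indices \<ge> 1 are genuine; all series below vanish
  on the others.  A formal sum of monomials (with integer coefficients) is its coefficient function.\<close>

type_synonym mono = "(nat \<times> nat) \<Rightarrow>\<^sub>0 nat"
type_synonym ps = "mono \<Rightarrow> int"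

definition valid_mono :: "mono \<Rightarrow> bool" where
  "valid_mono m \<longleftrightarrow> (\<forall>(i, j) \<in> Poly_Mapping.keys m. 1 \<le> i \<and> 1 \<le> j)"

definition mdeg :: "mono \<Rightarrow> nat" where
  "mdeg m = (\<Sum>(i, j) \<in> Poly_Mapping.keys m. i * Poly_Mapping.lookup m (i, j))"

definition mtype :: "mono \<Rightarrow> (nat \<times> nat) multiset" where
  "mtype m = image_mset (\<lambda>(i, j). (i, Poly_Mapping.lookup m (i, j))) (mset_set (Poly_Mapping.keys m))"

definition is_type :: "(nat \<times> nat) multiset \<Rightarrow> bool" where
  "is_type t \<longleftrightarrow> (\<forall>(b, m) \<in># t. 1 \<le> b \<and> 1 \<le> m)"

definition tdeg :: "(nat \<times> nat) multiset \<Rightarrow> nat" where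
  "tdeg t = (\<Sum>(b, m) \<in># t. b * m)"

definition types_of_deg :: "nat \<Rightarrow> (nat \<times> nat) multiset set" where
  "types_of_deg d = {t. is_type t \<and> tdeg t = d}"

definition ttrans :: "(nat \<times> nat) multiset \<Rightarrow> (nat \<times> nat) multiset" where
  "ttrans t = image_mset (\<lambda>(b, m). (m, b)) t"

definition pone :: ps where
  "pone m = (if m = 0 then 1 else 0)"

definition pmul :: "ps \<Rightarrow> ps \<Rightarrow> ps" where
  "pmul f g m = (\<Sum>(a, b) \<in> {(a, b). a + b = m}. f a * g b)"

definition pprod_list :: "ps list \<Rightarrow> ps" where
  "pprod_list fs = foldr pmul fs pone"

text \<open>substitution f(x_** ^ k), i.e. x_ij \<mapsto> x_ij^k (for k \<ge> 1)\<close>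
definition psubst :: "nat \<Rightarrow> ps \<Rightarrow> ps" where
  "psubst k f m = (if (\<forall>v. k dvd Poly_Mapping.lookup m v) then f (Poly_Mapping.map (\<lambda>e. e div k) m) else 0)"

definition Mt :: "(nat \<times> nat) multiset \<Rightarrow> ps" where
  "Mt t m = (if valid_mono m \<and> mtype m = t then 1 else 0)"

definition Hd :: "nat \<Rightarrow> ps" where
  "Hd d m = (if valid_mono m \<and> mdeg m = d then 1 else 0)"

definition Ed :: "nat \<Rightarrow> ps" where
  "Ed d m = (if valid_mono m \<and> mdeg m = d \<and> (\<forall>v \<in> Poly_Mapping.keys m. Poly_Mapping.lookup m v = 1) then 1 else 0)"

definition Hlam :: "(nat \<times> nat) multiset \<Rightarrow> ps" where
  "Hlam l = pprod_list (map (\<lambda>(d, k). psubst k (Hd d)) (sorted_list_of_multiset l))"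

definition Elam :: "(nat \<times> nat) multiset \<Rightarrow> ps" where
  "Elam l = pprod_list (map (\<lambda>(d, k). psubst k (Ed d)) (sorted_list_of_multiset l))"

definition arrangements :: "(nat \<times> nat) list \<Rightarrow> (nat \<times> nat) list \<Rightarrow> (nat \<Rightarrow> nat \<Rightarrow> nat) set" where
  "arrangements ts ls = {A.
     (\<forall>i j. (length ts \<le> i \<or> length ls \<le> j) \<longrightarrow> A i j = 0) \<and>
     (\<forall>i < length ts. (\<Sum>j < length ls. A i j * snd (ls ! j)) = snd (ts ! i)) \<and>
     (\<forall>j < length ls. (\<Sum>i < length ts. A i j * fst (ts ! i)) = fst (ls ! j))}"

definition arrangements01 :: "(nat \<times> nat) list \<Rightarrow> (nat \<times> nat) list \<Rightarrow> (nat \<Rightarrow> nat \<Rightarrow> nat) set" where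
  "arrangements01 ts ls = {A \<in> arrangements ts ls. \<forall>i j. A i j \<le> 1}"

definition acount :: "(nat \<times> nat) multiset \<Rightarrow> (nat \<times> nat) multiset \<Rightarrow> nat" where
  "acount t l = card (arrangements (sorted_list_of_multiset t) (sorted_list_of_multiset l))"

definition ecount :: "(nat \<times> nat) multiset \<Rightarrow> (nat \<times> nat) multiset \<Rightarrow> nat" where
  "ecount t l = card (arrangements01 (sorted_list_of_multiset t) (sorted_list_of_multiset l))"

definition mtransp :: "(nat \<Rightarrow> nat \<Rightarrow> nat) \<Rightarrow> (nat \<Rightarrow> nat \<Rightarrow> nat)" where
  "mtransp A = (\<lambda>i j. A j i)"

end

theory Submission
  imports Defs "HOL-Combinatorics.List_Permutation"
begin

definition arrQ :: "(nat \<Rightarrow> bool) \<Rightarrow> (nat \<times> nat) list \<Rightarrow> (nat \<times> nat) list \<Rightarrow> (nat \<Rightarrow> nat \<Rightarrow> nat) set" where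
  "arrQ Q ts ls = {A \<in> arrangements ts ls. \<forall>i j. A i j = 0 \<or> Q (A i j)}"

lemma arrQ_True: "arrQ (\<lambda>_. True) ts ls = arrangements ts ls"
  by (auto simp: arrQ_def)

lemma arrQ_01: "arrQ (\<lambda>e. e = 1) ts ls = arrangements01 ts ls"
proof -
  have "(x::nat) \<le> 1 \<longleftrightarrow> x = 0 \<or> x = 1" for x by arith
  then show ?thesis unfolding arrQ_def arrangements01_def by simp
qed

abbreviation sw :: "(nat \<times> nat) list \<Rightarrow> (nat \<times> nat) list" where
  "sw xs \<equiv> map (\<lambda>(b, m). (m, b)) xs"

lemma sw_nth: "i < length xs \<Longrightarrow> fst (sw xs ! i) = snd (xs ! i) \<and> snd (sw xs ! i) = fst (xs ! i)"
  by (auto simp: case_prod_beta)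

lemma mtransp_mtransp[simp]: "mtransp (mtransp A) = A"
  by (simp add: mtransp_def)

lemma mtransp_in: "A \<in> arrQ Q ts ls \<Longrightarrow> mtransp A \<in> arrQ Q (sw ls) (sw ts)"
  unfolding arrQ_def arrangements_def mtransp_def
  by (auto simp: case_prod_beta)

lemma bij_mtransp: "bij_betw mtransp (arrQ Q ts ls) (arrQ Q (sw ls) (sw ts))"
proof (rule bij_betw_byWitness[where f'=mtransp])
  have "sw (sw xs) = xs" for xs :: "(nat\<times>nat) list" by (induct xs) auto
  then show "mtransp ` arrQ Q (sw ls) (sw ts) \<subseteq> arrQ Q ts ls"
    using mtransp_in[of _ Q "sw ls" "sw ts"] by auto
qed (auto intro: mtransp_in)

lemma rowperm:
  assumes p: "bij_betw p {..<r} {..<r}" and lt: "length ts = r" "length ts' = r"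
    and e: "\<forall>i<r. ts' ! i = ts ! p i"
  shows "(\<lambda>A i j. if i < r then A (p i) j else 0) ` arrQ Q ts ls \<subseteq> arrQ Q ts' ls"
proof
  fix B assume "B \<in> (\<lambda>A i j. if i < r then A (p i) j else 0) ` arrQ Q ts ls"
  then obtain A where A: "A \<in> arrQ Q ts ls" and B: "B = (\<lambda>i j. if i < r then A (p i) j else 0)" by auto
  have pr: "i < r \<Longrightarrow> p i < r" for i using p by (auto simp: bij_betw_def)
  have cs: "(\<Sum>i<r. A (p i) j * fst (ts ! p i)) = (\<Sum>i<r. A i j * fst (ts ! i))" for j
    using sum.reindex_bij_betw[OF p, of "\<lambda>i. A i j * fst (ts ! i)"] by simp
  show "B \<in> arrQ Q ts' ls"
    using A lt pr unfolding arrQ_def arrangements_def B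
    by (auto simp: e cs)
qed

lemma card_rowperm:
  assumes "mset ts = mset ts'"
  shows "card (arrQ Q ts ls) = card (arrQ Q ts' ls)"
proof -
  define r where "r = length ts"
  have lt: "length ts' = r" using assms r_def by (metis size_mset)
  obtain p where p: "bij_betw p {..<r} {..<r}" and e: "\<forall>i<r. ts' ! i = ts ! p i"
    using permutation_Ex_bij[of ts' ts] assms lt r_def by auto
  define q where "q = inv_into {..<r} p"
  have q: "bij_betw q {..<r} {..<r}" using p q_def by (simp add: bij_betw_inv_into)
  have pq: "i < r \<Longrightarrow> p (q i) = i" for i using p q_def by (simp add: bij_betw_inv_into_right)
  have qp: "i < r \<Longrightarrow> q (p i) = i" for i using p q_def by (simp add: bij_betw_inv_into_left)
  have pr: "i < r \<Longrightarrow> p i < r" for i using p by (auto simp: bij_betw_def)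
  have qr: "i < r \<Longrightarrow> q i < r" for i using q by (auto simp: bij_betw_def)
  have e2: "\<forall>i<r. ts ! i = ts' ! q i" using e pq qr by metis
  show ?thesis
  proof (rule bij_betw_same_card[of "\<lambda>A i j. if i < r then A (p i) j else 0"],
         rule bij_betw_byWitness[where f'="\<lambda>A i j. if i < r then A (q i) j else 0"])
    show "\<forall>a\<in>arrQ Q ts ls. (\<lambda>i j. if i < r then (if q i < r then a (p (q i)) j else 0) else 0) = a"
      using pq qr r_def by (auto simp: arrQ_def arrangements_def fun_eq_iff)
    show "\<forall>a\<in>arrQ Q ts' ls. (\<lambda>i j. if i < r then (if p i < r then a (q (p i)) j else 0) else 0) = a"
      using qp pr lt by (auto simp: arrQ_def arrangements_def fun_eq_iff)
  qed (use rowperm[OF p r_def[symmetric] lt e] rowperm[OF q lt r_def[symmetric] e2] in auto)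
qed

lemma mset_sw: "mset (sw xs) = image_mset (\<lambda>(b, m). (m, b)) (mset xs)" by simp

lemma card_perm:
  assumes "mset ts = mset ts'" "mset ls = mset ls'"
  shows "card (arrQ Q ts ls) = card (arrQ Q ts' ls')"
proof -
  have "card (arrQ Q ts ls) = card (arrQ Q ts' ls)" by (rule card_rowperm[OF assms(1)])
  also have "\<dots> = card (arrQ Q (sw ls) (sw ts'))" by (rule bij_betw_same_card[OF bij_mtransp])
  also have "\<dots> = card (arrQ Q (sw ls') (sw ts'))" by (rule card_rowperm) (simp add: assms(2))
  also have "\<dots> = card (arrQ Q ts' ls')"
    by (rule sym, rule bij_betw_same_card[OF bij_mtransp])
  finally show ?thesis .
qed

lemma tdeg_list: "tdeg (mset ts) = (\<Sum>i<length ts. fst (ts ! i) * snd (ts ! i))"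
proof -
  have "tdeg (mset ts) = sum_list (map (\<lambda>(b, m). b * m) ts)"
    by (simp add: tdeg_def mset_map[symmetric] sum_mset_sum_list del: mset_map)
  also have "\<dots> = (\<Sum>i<length ts. (\<lambda>(b, m). b * m) (ts ! i))"
    by (simp add: sum_list_sum_nth atLeast0LessThan)
  finally show ?thesis by (simp add: case_prod_beta)
qed

lemma arr_deg:
  assumes "A \<in> arrangements ts ls"
  shows "tdeg (mset ts) = tdeg (mset ls)"
proof -
  have r: "\<forall>i < length ts. (\<Sum>j < length ls. A i j * snd (ls ! j)) = snd (ts ! i)"
   and c: "\<forall>j < length ls. (\<Sum>i < length ts. A i j * fst (ts ! i)) = fst (ls ! j)"
    using assms by (auto simp: arrangements_def)
  have "(\<Sum>i<length ts. fst (ts ! i) * snd (ts ! i))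
      = (\<Sum>i<length ts. \<Sum>j < length ls. fst (ts ! i) * (A i j * snd (ls ! j)))"
    by (intro sum.cong refl) (simp add: sum_distrib_left[symmetric] r)
  also have "\<dots> = (\<Sum>j < length ls. \<Sum>i<length ts. fst (ts ! i) * (A i j * snd (ls ! j)))"
    by (rule sum.swap)
  also have "\<dots> = (\<Sum>j < length ls. (\<Sum>i<length ts. A i j * fst (ts ! i)) * snd (ls ! j))"
    by (intro sum.cong refl) (simp add: sum_distrib_right sum_distrib_left mult_ac)
  also have "\<dots> = (\<Sum>j < length ls. fst (ls ! j) * snd (ls ! j))"
    using c by simp
  finally show ?thesis by (simp add: tdeg_list)
qed


definition genQ :: "(nat \<Rightarrow> bool) \<Rightarrow> nat \<Rightarrow> ps" where
  "genQ Q d x = (if valid_mono x \<and> mdeg x = d \<and> (\<forall>v\<in>Poly_Mapping.keys x. Q (Poly_Mapping.lookup x v)) then 1 else 0)"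

definition PP :: "(nat \<Rightarrow> bool) \<Rightarrow> (nat \<times> nat) list \<Rightarrow> ps" where
  "PP Q ls = pprod_list (map (\<lambda>(c, n). psubst n (genQ Q c)) ls)"

definition ArrK :: "(nat \<Rightarrow> bool) \<Rightarrow> (nat \<times> nat) set \<Rightarrow> ((nat \<times> nat) \<Rightarrow> nat) \<Rightarrow> (nat \<times> nat) list
   \<Rightarrow> ((nat \<times> nat) \<Rightarrow> nat \<Rightarrow> nat) set" where
  "ArrK Q K e ls = {A. (\<forall>v j. (v \<notin> K \<or> length ls \<le> j) \<longrightarrow> A v j = 0) \<and>
     (\<forall>v\<in>K. (\<Sum>j<length ls. A v j * snd (ls ! j)) = e v) \<and>
     (\<forall>j<length ls. (\<Sum>v\<in>K. A v j * fst v) = fst (ls ! j)) \<and>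
     (\<forall>v j. A v j = 0 \<or> Q (A v j))}"

lemma PP_Nil: "PP Q [] = pone" by (simp add: PP_def pprod_list_def)
lemma PP_Cons: "PP Q ((c, n) # ls) = pmul (psubst n (genQ Q c)) (PP Q ls)"
  by (simp add: PP_def pprod_list_def)

lemma fin_funs:
  assumes "finite S"
  shows "finite {f :: 'a \<Rightarrow> nat. (\<forall>x. x \<notin> S \<longrightarrow> f x = 0) \<and> (\<forall>x. f x \<le> N)}"
proof (rule finite_subset)
  show "{f :: 'a \<Rightarrow> nat. (\<forall>x. x \<notin> S \<longrightarrow> f x = 0) \<and> (\<forall>x. f x \<le> N)}
        \<subseteq> (\<lambda>g x. if x \<in> S then g x else 0) ` (S \<rightarrow>\<^sub>E {..N})"
  proof
    fix f :: "'a \<Rightarrow> nat" assume f: "f \<in> {f. (\<forall>x. x \<notin> S \<longrightarrow> f x = 0) \<and> (\<forall>x. f x \<le> N)}"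
    have "f = (\<lambda>x. if x \<in> S then restrict f S x else 0)" using f by (auto simp: fun_eq_iff)
    moreover have "restrict f S \<in> S \<rightarrow>\<^sub>E {..N}" using f by auto
    ultimately show "f \<in> (\<lambda>g x. if x \<in> S then g x else 0) ` (S \<rightarrow>\<^sub>E {..N})" by blast
  qed
  show "finite ((\<lambda>g x. if x \<in> S then g x else 0) ` (S \<rightarrow>\<^sub>E {..N}))"
    using assms by (intro finite_imageI finite_PiE) auto
qed

lemma fin_funs2:
  assumes "finite S"
  shows "finite {f :: 'a \<Rightarrow> 'b \<Rightarrow> nat. (\<forall>x y. (x, y) \<notin> S \<longrightarrow> f x y = 0) \<and> (\<forall>x y. f x y \<le> N)}"
proof (rule finite_subset)
  show "{f :: 'a \<Rightarrow> 'b \<Rightarrow> nat. (\<forall>x y. (x, y) \<notin> S \<longrightarrow> f x y = 0) \<and> (\<forall>x y. f x y \<le> N)}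
     \<subseteq> curry ` {g. (\<forall>x. x \<notin> S \<longrightarrow> g x = 0) \<and> (\<forall>x. g x \<le> N)}"
  proof
    fix f :: "'a \<Rightarrow> 'b \<Rightarrow> nat" assume f: "f \<in> {f. (\<forall>x y. (x, y) \<notin> S \<longrightarrow> f x y = 0) \<and> (\<forall>x y. f x y \<le> N)}"
    have "f = curry (case_prod f)" by simp
    moreover have "case_prod f \<in> {g. (\<forall>x. x \<notin> S \<longrightarrow> g x = 0) \<and> (\<forall>x. g x \<le> N)}" using f by auto
    ultimately show "f \<in> curry ` {g. (\<forall>x. x \<notin> S \<longrightarrow> g x = 0) \<and> (\<forall>x. g x \<le> N)}" by blast
  qed
qed (intro finite_imageI fin_funs assms)

lemma ArrK_bound:
  assumes "A \<in> ArrK Q K e ls" "\<forall>p\<in>set ls. 1 \<le> snd p" "v \<in> K" "j < length ls"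
  shows "A v j \<le> e v"
proof -
  have "A v j \<le> A v j * snd (ls ! j)" using assms(2,4) by (simp add: nth_mem)
  also have "\<dots> \<le> (\<Sum>j<length ls. A v j * snd (ls ! j))"
    by (rule member_le_sum) (use assms(4) in auto)
  also have "\<dots> = e v" using assms(1,3) by (simp add: ArrK_def)
  finally show ?thesis .
qed

lemma fin_ArrK:
  assumes "finite K" "\<forall>p\<in>set ls. 1 \<le> snd p"
  shows "finite (ArrK Q K e ls)"
proof -
  let ?B = "{f. (\<forall>x y. (x, y) \<notin> K \<times> {..<length ls} \<longrightarrow> f x y = 0) \<and> (\<forall>x y. f x y \<le> sum e K)}"
  have fB: "finite ?B"
    by (rule fin_funs2) (simp add: assms(1))
  have sub: "ArrK Q K e ls \<subseteq> ?B"
  proof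
    fix A assume A: "A \<in> ArrK Q K e ls"
    have A0: "\<forall>v j. (v \<notin> K \<or> length ls \<le> j) \<longrightarrow> A v j = 0"
      using A unfolding ArrK_def mem_Collect_eq by (rule conjunct1)
    have z: "\<forall>x y. (x, y) \<notin> K \<times> {..<length ls} \<longrightarrow> A x y = 0"
    proof (intro allI impI)
      fix x y assume h: "(x, y) \<notin> K \<times> {..<length ls}"
      have "x \<notin> K \<or> length ls \<le> y" using h by auto
      then show "A x y = 0" using A0 by blast
    qed
    have b: "\<forall>x y. A x y \<le> sum e K"
    proof (intro allI)
      fix x y
      show "A x y \<le> sum e K"
      proof (cases "x \<in> K \<and> y < length ls")
        case True
        then have "A x y \<le> e x" using ArrK_bound[OF A assms(2), of x y] by blast
        also have "\<dots> \<le> sum e K" using True assms(1) by (intro member_le_sum) auto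
        finally show ?thesis .
      next
        case False
        then have "x \<notin> K \<or> length ls \<le> y" by auto
        then have "A x y = 0" using A0 by blast
        then show ?thesis by simp
      qed
    qed
    show "A \<in> ?B" unfolding mem_Collect_eq using z b by (intro conjI)
  qed
  from finite_subset[OF sub fB] show ?thesis .
qed

lemma lookup_mapdiv: "Poly_Mapping.lookup (Poly_Mapping.map (\<lambda>e::nat. e div n) (x::mono)) v = Poly_Mapping.lookup x v div n"
  by (simp add: Poly_Mapping.map.rep_eq when_def)

lemma mdeg_K:
  assumes "finite K" "Poly_Mapping.keys x \<subseteq> K"
  shows "mdeg x = (\<Sum>v\<in>K. Poly_Mapping.lookup x v * fst v)"
proof -
  have "mdeg x = (\<Sum>v\<in>Poly_Mapping.keys x. Poly_Mapping.lookup x v * fst v)"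
    unfolding mdeg_def by (intro sum.cong refl) (auto simp: case_prod_beta)
  also have "\<dots> = (\<Sum>v\<in>K. Poly_Mapping.lookup x v * fst v)"
    by (rule sum.mono_neutral_left) (use assms in \<open>auto simp: in_keys_iff\<close>)
  finally show ?thesis .
qed

lemma fin_split: "finite {(x, y). x + y = (m :: mono)}"
proof -
  let ?X = "{x :: mono. \<forall>v. Poly_Mapping.lookup x v \<le> Poly_Mapping.lookup m v}"
  have F: "finite {f. (\<forall>v. v \<notin> Poly_Mapping.keys m \<longrightarrow> f v = 0) \<and>
          (\<forall>v. f v \<le> sum (Poly_Mapping.lookup m) (Poly_Mapping.keys m))}"
    by (rule fin_funs) simp
  have "Poly_Mapping.lookup ` ?X \<subseteq> {f. (\<forall>v. v \<notin> Poly_Mapping.keys m \<longrightarrow> f v = 0) \<and>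
          (\<forall>v. f v \<le> sum (Poly_Mapping.lookup m) (Poly_Mapping.keys m))}"
  proof
    fix f assume "f \<in> Poly_Mapping.lookup ` ?X"
    then obtain x where x: "x \<in> ?X" and f: "f = Poly_Mapping.lookup x" by blast
    have xv: "Poly_Mapping.lookup x v \<le> Poly_Mapping.lookup m v" for v using x by blast
    have a: "\<forall>v. v \<notin> Poly_Mapping.keys m \<longrightarrow> f v = 0"
    proof (intro allI impI)
      fix v assume "v \<notin> Poly_Mapping.keys m"
      then show "f v = 0" using xv[of v] by (simp add: f in_keys_iff)
    qed
    have b: "f v \<le> sum (Poly_Mapping.lookup m) (Poly_Mapping.keys m)" for v
    proof (cases "v \<in> Poly_Mapping.keys m")
      case True
      then have "Poly_Mapping.lookup m v \<le> sum (Poly_Mapping.lookup m) (Poly_Mapping.keys m)"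
        by (intro member_le_sum) auto
      then show ?thesis using xv[of v] unfolding f by linarith
    next
      case False then show ?thesis using xv[of v] f by (simp add: in_keys_iff)
    qed
    show "f \<in> {f. (\<forall>v. v \<notin> Poly_Mapping.keys m \<longrightarrow> f v = 0) \<and>
          (\<forall>v. f v \<le> sum (Poly_Mapping.lookup m) (Poly_Mapping.keys m))}" using a b by blast
  qed
  then have "finite (Poly_Mapping.lookup ` ?X)" using F by (rule finite_subset)
  then have fX: "finite ?X" by (rule finite_imageD) (rule inj_onI, simp)
  have subs: "{(x, y). x + y = m} \<subseteq> (\<lambda>x. (x, m - x)) ` ?X"
  proof
    fix p assume "p \<in> {(x, y). x + y = m}"
    then obtain x y where p: "p = (x, y)" and xy: "x + y = m" by blast
    have "Poly_Mapping.lookup x v \<le> Poly_Mapping.lookup m v" for v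
      using arg_cong[OF xy, of "\<lambda>p. Poly_Mapping.lookup p v"] by (simp add: lookup_add)
    then have "x \<in> ?X" by blast
    moreover have "y = m - x" using xy by auto
    ultimately show "p \<in> (\<lambda>x. (x, m - x)) ` ?X" using p by blast
  qed
  have "finite ((\<lambda>x. (x, m - x)) ` ?X)" using fX by (rule finite_imageI)
  from finite_subset[OF subs this] show ?thesis .
qed

lemma PP_invalid:
  assumes "\<forall>p\<in>set ls. 1 \<le> snd p"
  shows "\<not> valid_mono m \<Longrightarrow> PP Q ls m = 0"
  using assms
proof (induction ls arbitrary: m)
  case Nil
  have "m \<noteq> 0" using Nil by (auto simp: valid_mono_def)
  then show ?case by (simp add: PP_Nil pone_def)
next
  case (Cons p ls)
  obtain c n where p: "p = (c, n)" by force
  have n: "1 \<le> n" using Cons.prems p by auto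
  have "\<not> (\<forall>v\<in>Poly_Mapping.keys m. 1 \<le> fst v \<and> 1 \<le> snd v)"
    using Cons.prems(1) by (simp add: valid_mono_def case_prod_beta)
  then obtain v where v: "v \<in> Poly_Mapping.keys m" "\<not> (1 \<le> fst v \<and> 1 \<le> snd v)" by blast
  have zero: "psubst n (genQ Q c) x * PP Q ls y = 0" if "x + y = m" for x y
  proof (cases "Poly_Mapping.lookup y v = 0")
    case True
    then have xv: "Poly_Mapping.lookup x v \<noteq> 0" using v that by (auto simp: in_keys_iff lookup_add)
    have "psubst n (genQ Q c) x = 0"
    proof (cases "\<forall>w. n dvd Poly_Mapping.lookup x w")
      case True
      then have "n dvd Poly_Mapping.lookup x v" by blast
      then have "Poly_Mapping.lookup x v div n \<noteq> 0" using xv n by (metis dvd_mult_div_cancel mult_0_right)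
      then have vk: "v \<in> Poly_Mapping.keys (Poly_Mapping.map (\<lambda>e. e div n) x)"
        by (simp add: in_keys_iff lookup_mapdiv)
      have "\<not> valid_mono (Poly_Mapping.map (\<lambda>e. e div n) x)"
      proof
        assume "valid_mono (Poly_Mapping.map (\<lambda>e. e div n) x)"
        then show False using vk v(2) unfolding valid_mono_def by (cases v) auto
      qed
      then show ?thesis by (simp add: psubst_def genQ_def)
    qed (simp add: psubst_def, blast)
    then show ?thesis by simp
  next
    case False
    then have vk: "v \<in> Poly_Mapping.keys y" by (simp add: in_keys_iff)
    have "\<not> valid_mono y"
    proof
      assume "valid_mono y"
      then show False using vk v(2) unfolding valid_mono_def by (cases v) auto
    qed
    then show ?thesis using Cons.IH Cons.prems(2) by simp
  qed
  show ?case unfolding p PP_Cons pmul_def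
    by (rule sum.neutral) (clarsimp simp: zero)
qed


declare split_paired_All [simp del] split_paired_Ex [simp del]

definition Cols :: "(nat \<Rightarrow> bool) \<Rightarrow> (nat \<times> nat) set \<Rightarrow> ((nat \<times> nat) \<Rightarrow> nat) \<Rightarrow> nat \<Rightarrow> nat
   \<Rightarrow> ((nat \<times> nat) \<Rightarrow> nat) set" where
  "Cols Q K e c n = {a. (\<forall>v. v \<notin> K \<longrightarrow> a v = 0) \<and> (\<forall>v. n * a v \<le> e v) \<and>
     (\<Sum>v\<in>K. a v * fst v) = c \<and> (\<forall>v. a v = 0 \<or> Q (a v))}"

lemma fin_Cols:
  assumes "finite K" "1 \<le> n"
  shows "finite (Cols Q K e c n)"
proof -
  let ?B = "{f. (\<forall>x. x \<notin> K \<longrightarrow> f x = 0) \<and> (\<forall>x. f x \<le> sum e K)}"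
  have fB: "finite ?B" by (rule fin_funs) (simp add: assms(1))
  have sub: "Cols Q K e c n \<subseteq> ?B"
  proof
    fix a assume a: "a \<in> Cols Q K e c n"
    have z: "\<forall>v. v \<notin> K \<longrightarrow> a v = 0" and le: "\<forall>v. n * a v \<le> e v"
      using a unfolding Cols_def mem_Collect_eq by blast+
    have b: "\<forall>x. a x \<le> sum e K"
    proof
      fix x show "a x \<le> sum e K"
      proof (cases "x \<in> K")
        case True
        have "a x \<le> n * a x" using assms(2) by simp
        also have "\<dots> \<le> e x" using le by blast
        also have "\<dots> \<le> sum e K" using True assms(1) by (intro member_le_sum) auto
        finally show ?thesis .
      next
        case False then have "a x = 0" using z by blast
        then show ?thesis by simp
      qed
    qed
    show "a \<in> ?B" unfolding mem_Collect_eq using z b by (intro conjI)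
  qed
  from finite_subset[OF sub fB] show ?thesis .
qed

lemma split_card:
  assumes fK: "finite K" and pos: "\<forall>p\<in>set ls. 1 \<le> snd p" and n: "1 \<le> n"
  shows "card (ArrK Q K e ((c, n) # ls)) = (\<Sum>a\<in>Cols Q K e c n. card (ArrK Q K (\<lambda>v. e v - n * a v) ls))"
proof -
  let ?L = "length ls"
  define \<sigma> where "\<sigma> A = ((\<lambda>v. A v 0), (\<lambda>v j. A v (Suc j)))" for A :: "(nat \<times> nat) \<Rightarrow> nat \<Rightarrow> nat"
  define \<tau> where "\<tau> p = (\<lambda>v j. case j of 0 \<Rightarrow> fst p v | Suc j' \<Rightarrow> snd p v j')"
    for p :: "((nat \<times> nat) \<Rightarrow> nat) \<times> ((nat \<times> nat) \<Rightarrow> nat \<Rightarrow> nat)"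
  let ?S = "Sigma (Cols Q K e c n) (\<lambda>a. ArrK Q K (\<lambda>v. e v - n * a v) ls)"
  have bij: "bij_betw \<sigma> (ArrK Q K e ((c, n) # ls)) ?S"
  proof (rule bij_betw_byWitness[where f'=\<tau>])
    show "\<forall>A\<in>ArrK Q K e ((c, n) # ls). \<tau> (\<sigma> A) = A"
      by (auto simp: \<sigma>_def \<tau>_def fun_eq_iff split: nat.split)
    show "\<forall>p\<in>?S. \<sigma> (\<tau> p) = p"
      by (auto simp: \<sigma>_def \<tau>_def fun_eq_iff)
    show "\<sigma> ` ArrK Q K e ((c, n) # ls) \<subseteq> ?S"
    proof
      fix p assume "p \<in> \<sigma> ` ArrK Q K e ((c, n) # ls)"
      then obtain A where A: "A \<in> ArrK Q K e ((c, n) # ls)" and p: "p = \<sigma> A" by blast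
      have A0: "\<forall>v j. (v \<notin> K \<or> Suc ?L \<le> j) \<longrightarrow> A v j = 0"
       and R: "\<forall>v\<in>K. (\<Sum>j<Suc ?L. A v j * snd (((c, n) # ls) ! j)) = e v"
       and C: "\<forall>j<Suc ?L. (\<Sum>v\<in>K. A v j * fst v) = fst (((c, n) # ls) ! j)"
       and AQ: "\<forall>v j. A v j = 0 \<or> Q (A v j)"
        using A unfolding ArrK_def mem_Collect_eq by simp_all
      have R': "A v 0 * n + (\<Sum>j<?L. A v (Suc j) * snd (ls ! j)) = e v" if "v \<in> K" for v
        using R[rule_format, OF that] by (subst (asm) sum.lessThan_Suc_shift) simp
      have C0: "(\<Sum>v\<in>K. A v 0 * fst v) = c" using C by auto
      have C': "(\<Sum>v\<in>K. A v (Suc j) * fst v) = fst (ls ! j)" if "j < ?L" for j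
        using C that by auto
      have a: "(\<lambda>v. A v 0) \<in> Cols Q K e c n"
        unfolding Cols_def mem_Collect_eq
      proof (intro conjI allI impI)
        fix v show "n * A v 0 \<le> e v"
        proof (cases "v \<in> K")
          case True then show ?thesis using R'[OF True] by (simp add: mult.commute)
        next
          case False then have "A v 0 = 0" using A0 by blast
          then show ?thesis by simp
        qed
      qed (insert A0 C0 AQ, blast+)
      have b: "(\<lambda>v j. A v (Suc j)) \<in> ArrK Q K (\<lambda>v. e v - n * A v 0) ls"
        unfolding ArrK_def mem_Collect_eq
      proof (intro conjI allI impI ballI)
        fix v assume "v \<in> K"
        from R'[OF this] show "(\<Sum>j<?L. A v (Suc j) * snd (ls ! j)) = e v - n * A v 0"
          by (simp add: mult.commute)
      next
        fix v j assume "v \<notin> K \<or> ?L \<le> j"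
        then have "v \<notin> K \<or> Suc ?L \<le> Suc j" by simp
        then show "A v (Suc j) = 0" using A0 by blast
      next
        fix j assume "j < ?L" then show "(\<Sum>v\<in>K. A v (Suc j) * fst v) = fst (ls ! j)" by (rule C')
      next
        fix v j show "A v (Suc j) = 0 \<or> Q (A v (Suc j))" using AQ by blast
      qed
      show "p \<in> ?S" using a b p by (simp add: \<sigma>_def)
    qed
    show "\<tau> ` ?S \<subseteq> ArrK Q K e ((c, n) # ls)"
    proof
      fix A assume "A \<in> \<tau> ` ?S"
      then obtain a B where a: "a \<in> Cols Q K e c n" and B: "B \<in> ArrK Q K (\<lambda>v. e v - n * a v) ls"
        and A: "A = \<tau> (a, B)" by blast
      have az: "\<forall>v. v \<notin> K \<longrightarrow> a v = 0" and ale: "\<forall>v. n * a v \<le> e v"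
       and asum: "(\<Sum>v\<in>K. a v * fst v) = c" and aQ: "\<forall>v. a v = 0 \<or> Q (a v)"
        using a unfolding Cols_def mem_Collect_eq by simp_all
      have B0: "\<forall>v j. (v \<notin> K \<or> ?L \<le> j) \<longrightarrow> B v j = 0"
       and BR: "\<forall>v\<in>K. (\<Sum>j<?L. B v j * snd (ls ! j)) = e v - n * a v"
       and BC: "\<forall>j<?L. (\<Sum>v\<in>K. B v j * fst v) = fst (ls ! j)"
       and BQ: "\<forall>v j. B v j = 0 \<or> Q (B v j)"
        using B unfolding ArrK_def mem_Collect_eq by simp_all
      have Av0: "A v 0 = a v" and AvS: "A v (Suc j) = B v j" for v j
        by (simp_all add: A \<tau>_def)
      show "A \<in> ArrK Q K e ((c, n) # ls)"
        unfolding ArrK_def mem_Collect_eq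
      proof (intro conjI allI impI ballI)
        fix v j assume h: "v \<notin> K \<or> length ((c, n) # ls) \<le> j"
        show "A v j = 0"
        proof (cases j)
          case 0 then show ?thesis using h az by (simp add: Av0)
        next
          case (Suc j') then show ?thesis using h B0 by (simp add: AvS)
        qed
      next
        fix v assume v: "v \<in> K"
        have "(\<Sum>j<length ((c, n) # ls). A v j * snd (((c, n) # ls) ! j))
            = a v * n + (\<Sum>j<?L. B v j * snd (ls ! j))"
          by (subst length_Cons, subst sum.lessThan_Suc_shift) (simp add: Av0 AvS)
        also have "\<dots> = e v" using BR v ale[rule_format, of v] by (simp add: mult.commute)
        finally show "(\<Sum>j<length ((c, n) # ls). A v j * snd (((c, n) # ls) ! j)) = e v" .
      next
        fix j assume j: "j < length ((c, n) # ls)"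
        show "(\<Sum>v\<in>K. A v j * fst v) = fst (((c, n) # ls) ! j)"
        proof (cases j)
          case 0 then show ?thesis using asum by (simp add: Av0)
        next
          case (Suc j') then show ?thesis using BC j by (simp add: AvS)
        qed
      next
        fix v j show "A v j = 0 \<or> Q (A v j)"
          by (cases j) (use aQ BQ in \<open>simp_all add: Av0 AvS\<close>)
      qed
    qed
  qed
  have "card (ArrK Q K e ((c, n) # ls)) = card ?S" by (rule bij_betw_same_card[OF bij])
  also have "\<dots> = (\<Sum>a\<in>Cols Q K e c n. card (ArrK Q K (\<lambda>v. e v - n * a v) ls))"
    by (rule card_SigmaI[OF fin_Cols[OF fK n]]) (simp add: fin_ArrK[OF fK pos])
  finally show ?thesis .
qed


declare split_paired_All [simp del] split_paired_Ex [simp del]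

abbreviation dmap :: "nat \<Rightarrow> mono \<Rightarrow> mono" where
  "dmap n x \<equiv> Poly_Mapping.map (\<lambda>e::nat. e div n) x"

lemma F_one:
  "psubst n (genQ Q c) x = 1 \<longleftrightarrow> (\<forall>v. n dvd Poly_Mapping.lookup x v) \<and> valid_mono (dmap n x)
     \<and> mdeg (dmap n x) = c \<and> (\<forall>v\<in>Poly_Mapping.keys (dmap n x). Q (Poly_Mapping.lookup (dmap n x) v))"
  by (simp add: psubst_def genQ_def)

lemma F_01: "psubst n (genQ Q c) x = 0 \<or> psubst n (genQ Q c) x = 1"
  by (simp add: psubst_def genQ_def)

lemma keys_le:
  assumes "x + y = (m :: mono)"
  shows "Poly_Mapping.keys x \<subseteq> Poly_Mapping.keys m" "Poly_Mapping.keys y \<subseteq> Poly_Mapping.keys m"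
    "\<And>v. Poly_Mapping.lookup x v + Poly_Mapping.lookup y v = Poly_Mapping.lookup m v"
proof -
  show l: "\<And>v. Poly_Mapping.lookup x v + Poly_Mapping.lookup y v = Poly_Mapping.lookup m v"
    using assms by (auto simp: lookup_add[symmetric])
  show "Poly_Mapping.keys x \<subseteq> Poly_Mapping.keys m" "Poly_Mapping.keys y \<subseteq> Poly_Mapping.keys m"
  proof -
    show "Poly_Mapping.keys x \<subseteq> Poly_Mapping.keys m"
    proof
      fix v assume "v \<in> Poly_Mapping.keys x"
      then have "Poly_Mapping.lookup x v \<noteq> 0" by (simp add: in_keys_iff)
      then have "Poly_Mapping.lookup m v \<noteq> 0" using l[of v] by linarith
      then show "v \<in> Poly_Mapping.keys m" by (simp add: in_keys_iff)
    qed
    show "Poly_Mapping.keys y \<subseteq> Poly_Mapping.keys m"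
    proof
      fix v assume "v \<in> Poly_Mapping.keys y"
      then have "Poly_Mapping.lookup y v \<noteq> 0" by (simp add: in_keys_iff)
      then have "Poly_Mapping.lookup m v \<noteq> 0" using l[of v] by linarith
      then show "v \<in> Poly_Mapping.keys m" by (simp add: in_keys_iff)
    qed
  qed
qed

lemma pmul_eq:
  assumes fK: "finite K" and vK: "\<forall>v\<in>K. 1 \<le> fst v \<and> 1 \<le> snd v" and km: "Poly_Mapping.keys m \<subseteq> K"
    and n: "1 \<le> n"
    and IH: "\<And>y. Poly_Mapping.keys y \<subseteq> K \<Longrightarrow> G y = int (card (ArrK Q K (Poly_Mapping.lookup y) ls))"
  shows "pmul (psubst n (genQ Q c)) G m
    = (\<Sum>a\<in>Cols Q K (Poly_Mapping.lookup m) c n. int (card (ArrK Q K (\<lambda>v. Poly_Mapping.lookup m v - n * a v) ls)))"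
proof -
  let ?F = "psubst n (genQ Q c)"
  let ?S = "{(x, y). x + y = m}"
  let ?S' = "{p \<in> ?S. ?F (fst p) = 1}"
  let ?e = "Poly_Mapping.lookup m"
  define \<phi> where "\<phi> a = int (card (ArrK Q K (\<lambda>v. ?e v - n * a v) ls))" for a
  define h where "h p = (\<lambda>v. Poly_Mapping.lookup (fst p) v div n)" for p :: "mono \<times> mono"
  have "pmul ?F G m = (\<Sum>p\<in>?S. ?F (fst p) * G (snd p))"
    unfolding pmul_def by (intro sum.cong refl) (auto simp: case_prod_beta)
  also have "\<dots> = (\<Sum>p\<in>?S'. G (snd p))"
  proof (rule sum.mono_neutral_cong_right)
    show "finite ?S" by (rule fin_split)
    show "?S' \<subseteq> ?S" by blast
    show "\<forall>p\<in>?S - ?S'. ?F (fst p) * G (snd p) = 0" using F_01 by auto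
    show "\<And>p. p \<in> ?S' \<Longrightarrow> ?F (fst p) * G (snd p) = G (snd p)" by simp
  qed
  also have "\<dots> = (\<Sum>p\<in>?S'. \<phi> (h p))"
  proof (rule sum.cong[OF refl])
    fix p assume p: "p \<in> ?S'"
    obtain x y where xy: "p = (x, y)" by force
    have s: "x + y = m" and F1: "?F x = 1" using p xy by auto
    have dv: "\<forall>v. n dvd Poly_Mapping.lookup x v" using F1 F_one by blast
    have "Poly_Mapping.lookup y = (\<lambda>v. ?e v - n * (Poly_Mapping.lookup x v div n))"
    proof
      fix v
      have "n * (Poly_Mapping.lookup x v div n) = Poly_Mapping.lookup x v" using dv by simp
      then show "Poly_Mapping.lookup y v = ?e v - n * (Poly_Mapping.lookup x v div n)"
        using keys_le(3)[OF s, of v] by simp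
    qed
    moreover have "Poly_Mapping.keys y \<subseteq> K" using keys_le(2)[OF s] km by blast
    ultimately show "G (snd p) = \<phi> (h p)" using IH by (simp add: xy \<phi>_def h_def)
  qed
  also have "\<dots> = (\<Sum>a\<in>Cols Q K ?e c n. \<phi> a)"
  proof (rule sum.reindex_bij_betw)
    show "bij_betw h ?S' (Cols Q K ?e c n)"
    proof (rule bij_betw_imageI)
      show "inj_on h ?S'"
      proof (rule inj_onI)
        fix p q assume p: "p \<in> ?S'" and q: "q \<in> ?S'" and hpq: "h p = h q"
        obtain x y where xy: "p = (x, y)" by force
        obtain x' y' where xy': "q = (x', y')" by force
        have s: "x + y = m" and F1: "?F x = 1" using p xy by auto
        have s': "x' + y' = m" and F1': "?F x' = 1" using q xy' by auto
        have dv: "\<forall>v. n dvd Poly_Mapping.lookup x v" using F1 F_one by blast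
        have dv': "\<forall>v. n dvd Poly_Mapping.lookup x' v" using F1' F_one by blast
        have "Poly_Mapping.lookup x v = Poly_Mapping.lookup x' v" for v
        proof -
          have "h p v = h q v" using hpq by simp
          then have "Poly_Mapping.lookup x v div n = Poly_Mapping.lookup x' v div n"
            by (simp add: xy xy' h_def)
          then have "n * (Poly_Mapping.lookup x v div n) = n * (Poly_Mapping.lookup x' v div n)" by simp
          then show ?thesis using dv dv' by simp
        qed
        then have "x = x'" by (rule poly_mapping_eqI)
        moreover then have "y = y'" using s s' by (metis add_left_cancel)
        ultimately show "p = q" using xy xy' by simp
      qed
      show "h ` ?S' = Cols Q K ?e c n"
      proof
        show "h ` ?S' \<subseteq> Cols Q K ?e c n"
        proof
          fix a assume "a \<in> h ` ?S'"
          then obtain x y where s: "x + y = m" and F1: "?F x = 1" and a: "a = h (x, y)" by auto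
          have dv: "\<forall>v. n dvd Poly_Mapping.lookup x v"
            and mdg: "mdeg (dmap n x) = c"
            and qq: "\<forall>v\<in>Poly_Mapping.keys (dmap n x). Q (Poly_Mapping.lookup (dmap n x) v)"
            using F1 F_one by blast+
          have kx: "Poly_Mapping.keys x \<subseteq> K" using keys_le(1)[OF s] km by blast
          have av: "a v = Poly_Mapping.lookup x v div n" for v by (simp add: a h_def)
          have kd: "Poly_Mapping.keys (dmap n x) \<subseteq> K"
          proof
            fix v assume "v \<in> Poly_Mapping.keys (dmap n x)"
            then have "Poly_Mapping.lookup x v div n \<noteq> 0" by (simp add: in_keys_iff lookup_mapdiv)
            then have "Poly_Mapping.lookup x v \<noteq> 0" by (metis div_0)
            then have "v \<in> Poly_Mapping.keys x" by (simp add: in_keys_iff)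
            then show "v \<in> K" using kx by blast
          qed
          show "a \<in> Cols Q K ?e c n"
            unfolding Cols_def mem_Collect_eq
          proof (intro conjI allI impI)
            fix v assume "v \<notin> K"
            then have "v \<notin> Poly_Mapping.keys x" using kx by blast
            then show "a v = 0" by (simp add: av in_keys_iff)
          next
            fix v
            have "n * a v = Poly_Mapping.lookup x v" using dv by (simp add: av)
            also have "\<dots> \<le> ?e v" using keys_le(3)[OF s, of v] by simp
            finally show "n * a v \<le> ?e v" .
          next
            show "(\<Sum>v\<in>K. a v * fst v) = c"
              using mdeg_K[OF fK kd] mdg by (simp add: av lookup_mapdiv)
          next
            fix v show "a v = 0 \<or> Q (a v)"
            proof (cases "a v = 0")
              case False
              then have "v \<in> Poly_Mapping.keys (dmap n x)" by (simp add: av in_keys_iff lookup_mapdiv)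
              then show ?thesis using qq by (simp add: av lookup_mapdiv)
            qed simp
          qed
        qed
        show "Cols Q K ?e c n \<subseteq> h ` ?S'"
        proof
          fix a assume a: "a \<in> Cols Q K ?e c n"
          have az: "\<forall>v. v \<notin> K \<longrightarrow> a v = 0" and ale: "\<forall>v. n * a v \<le> ?e v"
           and asum: "(\<Sum>v\<in>K. a v * fst v) = c" and aQ: "\<forall>v. a v = 0 \<or> Q (a v)"
            using a unfolding Cols_def mem_Collect_eq by simp_all
          have f1: "finite {v. n * a v \<noteq> 0}"
          proof (rule finite_subset[OF _ fK])
            show "{v. n * a v \<noteq> 0} \<subseteq> K"
            proof
              fix v assume "v \<in> {v. n * a v \<noteq> 0}"
              then have "a v \<noteq> 0" by simp
              then show "v \<in> K" using az by metis
            qed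
          qed
          have f2: "finite {v. ?e v - n * a v \<noteq> 0}"
          proof (rule finite_subset[of _ "Poly_Mapping.keys m"])
            show "{v. ?e v - n * a v \<noteq> 0} \<subseteq> Poly_Mapping.keys m"
            proof
              fix v assume "v \<in> {v. ?e v - n * a v \<noteq> 0}"
              then have "?e v \<noteq> 0" by simp
              then show "v \<in> Poly_Mapping.keys m" by (simp add: in_keys_iff)
            qed
          qed simp
          define x where "x = Abs_poly_mapping (\<lambda>v. n * a v)"
          define y where "y = Abs_poly_mapping (\<lambda>v. ?e v - n * a v)"
          have lx: "Poly_Mapping.lookup x = (\<lambda>v. n * a v)" unfolding x_def by (rule lookup_Abs_poly_mapping[OF f1])
          have ly: "Poly_Mapping.lookup y = (\<lambda>v. ?e v - n * a v)" unfolding y_def by (rule lookup_Abs_poly_mapping[OF f2])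
          have s: "x + y = m"
          proof (rule poly_mapping_eqI)
            fix v
            have "n * a v \<le> ?e v" using ale by metis
            then show "Poly_Mapping.lookup (x + y) v = ?e v" by (simp add: lookup_add lx ly)
          qed
          have ld: "Poly_Mapping.lookup (dmap n x) v = a v" for v
            using n by (simp only: lookup_mapdiv lx) simp
          have kd: "Poly_Mapping.keys (dmap n x) \<subseteq> K"
          proof
            fix v assume "v \<in> Poly_Mapping.keys (dmap n x)"
            then have "Poly_Mapping.lookup (dmap n x) v \<noteq> 0" by (metis in_keys_iff)
            then have "a v \<noteq> 0" by (metis ld)
            then show "v \<in> K" using az by metis
          qed
          have F1: "?F x = 1"
            unfolding F_one
          proof (intro conjI)
            show "\<forall>v. n dvd Poly_Mapping.lookup x v" by (simp add: lx)
            show "valid_mono (dmap n x)"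
              unfolding valid_mono_def
            proof
              fix v assume "v \<in> Poly_Mapping.keys (dmap n x)"
              then have "v \<in> K" using kd by (meson subsetD)
              then have "1 \<le> fst v \<and> 1 \<le> snd v" using vK by metis
              then show "case v of (i, j) \<Rightarrow> 1 \<le> i \<and> 1 \<le> j" by (simp add: case_prod_beta)
            qed
            show "mdeg (dmap n x) = c" using mdeg_K[OF fK kd] asum by (simp add: ld)
            show "\<forall>v\<in>Poly_Mapping.keys (dmap n x). Q (Poly_Mapping.lookup (dmap n x) v)"
            proof
              fix v assume "v \<in> Poly_Mapping.keys (dmap n x)"
              then have "a v \<noteq> 0" by (metis in_keys_iff ld)
              then have "Q (a v)" using aQ by metis
              then show "Q (Poly_Mapping.lookup (dmap n x) v)" by (metis ld)
            qed
          qed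
          have xS: "(x, y) \<in> ?S'"
          proof (rule CollectI, rule conjI)
            show "(x, y) \<in> {(x, y). x + y = m}" using s by simp
            show "?F (fst (x, y)) = 1" using F1 by simp
          qed
          have hxy: "h (x, y) = a"
          proof
            fix v show "h (x, y) v = a v" unfolding h_def using n by (simp add: lx)
          qed
          show "a \<in> h ` ?S'" by (rule image_eqI[where f=h, OF hxy[symmetric] xS])
        qed
      qed
    qed
  qed
  finally show ?thesis by (simp add: \<phi>_def)
qed


declare split_paired_All [simp del] split_paired_Ex [simp del]

lemma PP_main:
  assumes pos: "\<forall>p\<in>set ls. 1 \<le> snd p" and fK: "finite K" and vK: "\<forall>v\<in>K. 1 \<le> fst v \<and> 1 \<le> snd v"
  shows "Poly_Mapping.keys m \<subseteq> K \<Longrightarrow> PP Q ls m = int (card (ArrK Q K (Poly_Mapping.lookup m) ls))"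
  using pos
proof (induction ls arbitrary: m)
  case Nil
  show ?case
  proof (cases "m = 0")
    case True
    have "ArrK Q K (Poly_Mapping.lookup m) [] = {\<lambda>_ _. 0}"
    proof (rule set_eqI)
      fix A :: "(nat \<times> nat) \<Rightarrow> nat \<Rightarrow> nat"
      show "A \<in> ArrK Q K (Poly_Mapping.lookup m) [] \<longleftrightarrow> A \<in> {\<lambda>_ _. 0}"
      proof
        assume "A \<in> ArrK Q K (Poly_Mapping.lookup m) []"
        then have "\<forall>v j. A v j = 0" unfolding ArrK_def by simp
        then show "A \<in> {\<lambda>_ _. 0}" by (simp add: fun_eq_iff)
      next
        assume "A \<in> {\<lambda>_ _. 0}"
        then show "A \<in> ArrK Q K (Poly_Mapping.lookup m) []" unfolding ArrK_def using True by simp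
      qed
    qed
    then have c1: "card (ArrK Q K (Poly_Mapping.lookup m) []) = 1" by simp
    show ?thesis unfolding PP_Nil pone_def by (simp only: if_P[OF True] c1 of_nat_1)
  next
    case False
    obtain v where v: "Poly_Mapping.lookup m v \<noteq> 0"
      using False by (metis lookup_zero poly_mapping_eqI)
    then have "v \<in> Poly_Mapping.keys m" by (simp add: in_keys_iff)
    from this Nil.prems(1) have vK': "v \<in> K" by (rule rev_subsetD)
    have "ArrK Q K (Poly_Mapping.lookup m) [] = {}"
    proof (rule equals0I)
      fix A assume "A \<in> ArrK Q K (Poly_Mapping.lookup m) []"
      then have "\<forall>w\<in>K. 0 = Poly_Mapping.lookup m w" unfolding ArrK_def by simp
      then have "0 = Poly_Mapping.lookup m v" using vK' by simp
      with v show False by simp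
    qed
    then show ?thesis by (simp add: PP_Nil pone_def False)
  qed
next
  case (Cons p ls)
  obtain c n where p: "p = (c, n)" by force
  have n: "1 \<le> n" using Cons.prems(2) p by auto
  have pos': "\<forall>p\<in>set ls. 1 \<le> snd p" using Cons.prems(2) by simp
  have IH: "\<And>y. Poly_Mapping.keys y \<subseteq> K \<Longrightarrow> PP Q ls y = int (card (ArrK Q K (Poly_Mapping.lookup y) ls))"
  proof -
    fix y :: mono assume h: "Poly_Mapping.keys y \<subseteq> K"
    show "PP Q ls y = int (card (ArrK Q K (Poly_Mapping.lookup y) ls))" by (rule Cons.IH[OF h pos'])
  qed
  have "PP Q (p # ls) m = pmul (psubst n (genQ Q c)) (PP Q ls) m" by (simp add: p PP_Cons)
  also have "\<dots> = (\<Sum>a\<in>Cols Q K (Poly_Mapping.lookup m) c n.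
       int (card (ArrK Q K (\<lambda>v. Poly_Mapping.lookup m v - n * a v) ls)))"
    by (rule pmul_eq[OF fK vK Cons.prems(1) n IH])
  also have "\<dots> = int (\<Sum>a\<in>Cols Q K (Poly_Mapping.lookup m) c n.
       card (ArrK Q K (\<lambda>v. Poly_Mapping.lookup m v - n * a v) ls))"
    by (simp add: of_nat_sum)
  also have "\<dots> = int (card (ArrK Q K (Poly_Mapping.lookup m) ((c, n) # ls)))"
    by (simp add: split_card[OF fK pos' n])
  finally show ?case by (simp add: p)
qed

lemma ArrK_arrQ:
  assumes fK: "finite K"
  shows "card (ArrK Q K e ls) = card (arrQ Q (map (\<lambda>v. (fst v, e v)) (sorted_list_of_set K)) ls)"
proof -
  define ks where "ks = sorted_list_of_set K"
  define r where "r = length ks"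
  define ts where "ts = map (\<lambda>v. (fst v, e v)) ks"
  define idx where "idx = inv_into {..<r} (nth ks)"
  have dks: "distinct ks" and sks: "set ks = K" using fK by (simp_all add: ks_def)
  have lts: "length ts = r" by (simp add: ts_def r_def)
  have bij: "bij_betw (nth ks) {..<r} K" using bij_betw_nth[OF dks] sks r_def by simp
  have ix1: "v \<in> K \<Longrightarrow> idx v < r \<and> ks ! idx v = v" for v
    using bij by (metis bij_betw_inv_into_right bij_betw_imp_surj_on inv_into_into idx_def lessThan_iff)
  have ix2: "i < r \<Longrightarrow> idx (ks ! i) = i \<and> ks ! i \<in> K" for i
    using bij by (metis bij_betw_inv_into_left bij_betw_apply idx_def lessThan_iff)
  have sumK: "(\<Sum>v\<in>K. g v) = (\<Sum>i<r. g (ks ! i))" for g :: "nat \<times> nat \<Rightarrow> nat"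
    using sum.reindex_bij_betw[OF bij, of g] by simp
  have tsi: "i < r \<Longrightarrow> ts ! i = (fst (ks ! i), e (ks ! i))" for i by (simp add: ts_def r_def)
  define \<psi> where "\<psi> A = (\<lambda>i j. if i < r then A (ks ! i) j else 0)" for A :: "(nat \<times> nat) \<Rightarrow> nat \<Rightarrow> nat"
  define \<phi> where "\<phi> B = (\<lambda>v j. if v \<in> K then B (idx v) j else 0)" for B :: "nat \<Rightarrow> nat \<Rightarrow> nat"
  have "bij_betw \<psi> (ArrK Q K e ls) (arrQ Q ts ls)"
  proof (rule bij_betw_byWitness[where f'=\<phi>])
    show "\<forall>A\<in>ArrK Q K e ls. \<phi> (\<psi> A) = A"
    proof
      fix A assume A: "A \<in> ArrK Q K e ls"
      have A0: "\<forall>v j. (v \<notin> K \<or> length ls \<le> j) \<longrightarrow> A v j = 0"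
        using A unfolding ArrK_def mem_Collect_eq by (rule conjunct1)
      show "\<phi> (\<psi> A) = A"
      proof (intro ext)
        fix v j show "\<phi> (\<psi> A) v j = A v j"
        proof (cases "v \<in> K")
          case True then show ?thesis using ix1[OF True] by (simp add: \<phi>_def \<psi>_def)
        next
          case False then have "A v j = 0" using A0 by metis
          then show ?thesis using False by (simp add: \<phi>_def)
        qed
      qed
    qed
    show "\<forall>B\<in>arrQ Q ts ls. \<psi> (\<phi> B) = B"
    proof
      fix B assume B: "B \<in> arrQ Q ts ls"
      have B0: "\<forall>i j. (length ts \<le> i \<or> length ls \<le> j) \<longrightarrow> B i j = 0"
        using B unfolding arrQ_def arrangements_def by simp
      show "\<psi> (\<phi> B) = B"
      proof (intro ext)
        fix i j show "\<psi> (\<phi> B) i j = B i j"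
        proof (cases "i < r")
          case True then show ?thesis using ix2[OF True] by (simp add: \<phi>_def \<psi>_def)
        next
          case False then have "B i j = 0" using B0 lts by (metis not_less)
          then show ?thesis using False by (simp add: \<psi>_def)
        qed
      qed
    qed
    show "\<psi> ` ArrK Q K e ls \<subseteq> arrQ Q ts ls"
    proof
      fix B assume "B \<in> \<psi> ` ArrK Q K e ls"
      then obtain A where A: "A \<in> ArrK Q K e ls" and B: "B = \<psi> A" by blast
      have A0: "\<forall>v j. (v \<notin> K \<or> length ls \<le> j) \<longrightarrow> A v j = 0"
       and AR: "\<forall>v\<in>K. (\<Sum>j<length ls. A v j * snd (ls ! j)) = e v"
       and AC: "\<forall>j<length ls. (\<Sum>v\<in>K. A v j * fst v) = fst (ls ! j)"
       and AQ: "\<forall>v j. A v j = 0 \<or> Q (A v j)"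
        using A unfolding ArrK_def mem_Collect_eq by simp_all
      show "B \<in> arrQ Q ts ls"
        unfolding arrQ_def arrangements_def mem_Collect_eq
      proof (intro conjI allI impI)
        fix i j assume h: "length ts \<le> i \<or> length ls \<le> j"
        show "B i j = 0"
        proof (cases "i < r")
          case True
          then have "length ls \<le> j" using h lts by simp
          then have "A (ks ! i) j = 0" using A0 by metis
          then show ?thesis using True by (simp add: B \<psi>_def)
        qed (simp add: B \<psi>_def)
      next
        fix i assume i: "i < length ts"
        then have ir: "i < r" using lts by simp
        show "(\<Sum>j<length ls. B i j * snd (ls ! j)) = snd (ts ! i)"
          using AR ix2[OF ir] ir by (simp add: B \<psi>_def tsi)
      next
        fix j assume j: "j < length ls"
        have "(\<Sum>i<length ts. B i j * fst (ts ! i)) = (\<Sum>i<r. A (ks ! i) j * fst (ks ! i))"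
          using lts by (intro sum.cong) (simp_all add: B \<psi>_def tsi)
        also have "\<dots> = (\<Sum>v\<in>K. A v j * fst v)" by (rule sumK[symmetric])
        also have "\<dots> = fst (ls ! j)" using AC j by simp
        finally show "(\<Sum>i<length ts. B i j * fst (ts ! i)) = fst (ls ! j)" .
      next
        fix i j show "B i j = 0 \<or> Q (B i j)" using AQ by (simp add: B \<psi>_def)
      qed
    qed
    show "\<phi> ` arrQ Q ts ls \<subseteq> ArrK Q K e ls"
    proof
      fix A assume "A \<in> \<phi> ` arrQ Q ts ls"
      then obtain B where B: "B \<in> arrQ Q ts ls" and A: "A = \<phi> B" by blast
      have B0: "\<forall>i j. (length ts \<le> i \<or> length ls \<le> j) \<longrightarrow> B i j = 0"
       and BR: "\<forall>i<length ts. (\<Sum>j<length ls. B i j * snd (ls ! j)) = snd (ts ! i)"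
       and BC: "\<forall>j<length ls. (\<Sum>i<length ts. B i j * fst (ts ! i)) = fst (ls ! j)"
       and BQ: "\<forall>i j. B i j = 0 \<or> Q (B i j)"
        using B unfolding arrQ_def arrangements_def mem_Collect_eq by simp_all
      show "A \<in> ArrK Q K e ls"
        unfolding ArrK_def mem_Collect_eq
      proof (intro conjI allI impI ballI)
        fix v j assume h: "v \<notin> K \<or> length ls \<le> j"
        show "A v j = 0"
        proof (cases "v \<in> K")
          case True
          then have "length ls \<le> j" using h by simp
          then have "B (idx v) j = 0" using B0 by metis
          then show ?thesis using True by (simp add: A \<phi>_def)
        qed (simp add: A \<phi>_def)
      next
        fix v assume v: "v \<in> K"
        have "(\<Sum>j<length ls. A v j * snd (ls ! j)) = (\<Sum>j<length ls. B (idx v) j * snd (ls ! j))"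
          using v by (simp add: A \<phi>_def)
        also have "\<dots> = snd (ts ! idx v)" using BR ix1[OF v] lts by simp
        also have "\<dots> = e v" using ix1[OF v] by (simp add: tsi)
        finally show "(\<Sum>j<length ls. A v j * snd (ls ! j)) = e v" .
      next
        fix j assume j: "j < length ls"
        have "(\<Sum>v\<in>K. A v j * fst v) = (\<Sum>i<r. A (ks ! i) j * fst (ks ! i))" by (rule sumK)
        also have "\<dots> = (\<Sum>i<r. B i j * fst (ts ! i))"
          by (intro sum.cong refl) (simp add: A \<phi>_def ix2 tsi)
        also have "\<dots> = fst (ls ! j)" using BC j lts by simp
        finally show "(\<Sum>v\<in>K. A v j * fst v) = fst (ls ! j)" .
      next
        fix v j show "A v j = 0 \<or> Q (A v j)" using BQ by (simp add: A \<phi>_def)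
      qed
    qed
  qed
  then have "card (ArrK Q K e ls) = card (arrQ Q ts ls)" by (rule bij_betw_same_card)
  then show ?thesis by (simp add: ts_def ks_def)
qed


declare split_paired_All [simp del] split_paired_Ex [simp del]

lemma Hd_gen: "Hd = genQ (\<lambda>_. True)"
  by (simp add: fun_eq_iff Hd_def genQ_def)

lemma Ed_gen: "Ed = genQ (\<lambda>e. e = 1)"
  by (simp add: fun_eq_iff Ed_def genQ_def)

lemma Hlam_PP: "Hlam l = PP (\<lambda>_. True) (sorted_list_of_multiset l)"
  unfolding Hlam_def PP_def Hd_gen ..

lemma Elam_PP: "Elam l = PP (\<lambda>e. e = 1) (sorted_list_of_multiset l)"
  unfolding Elam_def PP_def Ed_gen ..

lemma pos_of_type:
  assumes "is_type l"
  shows "\<forall>p\<in>set (sorted_list_of_multiset l). 1 \<le> snd p"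
proof
  fix p assume "p \<in> set (sorted_list_of_multiset l)"
  then have "p \<in># l" by simp
  then show "1 \<le> snd p" using assms unfolding is_type_def by (cases p) auto
qed

lemma mtype_mset:
  "mset (map (\<lambda>v. (fst v, Poly_Mapping.lookup m v)) (sorted_list_of_set (Poly_Mapping.keys m))) = mtype m"
proof -
  have "mset (sorted_list_of_set (Poly_Mapping.keys m)) = mset_set (Poly_Mapping.keys m)"
    by (metis mset_sorted_list_of_multiset sorted_list_of_mset_set)
  moreover have "(\<lambda>(i, j). (i, Poly_Mapping.lookup m (i, j))) = (\<lambda>v. (fst v, Poly_Mapping.lookup m v))"
    by (simp add: fun_eq_iff case_prod_beta)
  ultimately show ?thesis by (simp add: mtype_def)
qed

lemma is_type_mtype:
  assumes "valid_mono m"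
  shows "is_type (mtype m)"
  unfolding is_type_def
proof
  fix x assume "x \<in># mtype m"
  then obtain v where v: "v \<in> Poly_Mapping.keys m" and x: "x = (fst v, Poly_Mapping.lookup m v)"
    by (auto simp: mtype_def case_prod_beta)
  have "1 \<le> fst v \<and> 1 \<le> snd v" using assms v unfolding valid_mono_def by (cases v) auto
  moreover have "Poly_Mapping.lookup m v \<noteq> 0" using v by (simp add: in_keys_iff)
  ultimately show "case x of (b, m) \<Rightarrow> 1 \<le> b \<and> 1 \<le> m" using x by simp
qed

lemma type_bounds:
  "is_type t \<Longrightarrow> size t \<le> tdeg t \<and> (\<forall>x\<in>#t. fst x \<le> tdeg t \<and> snd x \<le> tdeg t)"
proof (induction t)
  case empty then show ?case by simp
next
  case (add x t)
  have it: "is_type t" using add.prems by (simp add: is_type_def)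
  have x1: "1 \<le> fst x" "1 \<le> snd x" using add.prems unfolding is_type_def by (cases x, auto)+
  have td: "tdeg (add_mset x t) = fst x * snd x + tdeg t" by (simp add: tdeg_def case_prod_beta)
  have a: "fst x \<le> fst x * snd x" "snd x \<le> fst x * snd x" "1 \<le> fst x * snd x" using x1 by simp_all
  have IH: "size t \<le> tdeg t" "\<forall>y\<in>#t. fst y \<le> tdeg t \<and> snd y \<le> tdeg t"
    using add.IH[OF it] by simp_all
  have "size (add_mset x t) \<le> tdeg (add_mset x t)" using IH(1) a(3) td size_add_mset[of x t] by linarith
  moreover have "\<forall>y\<in>#add_mset x t. fst y \<le> tdeg (add_mset x t) \<and> snd y \<le> tdeg (add_mset x t)"
  proof
    fix y assume "y \<in># add_mset x t"
    then consider "y = x" | "y \<in># t" by auto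
    then show "fst y \<le> tdeg (add_mset x t) \<and> snd y \<le> tdeg (add_mset x t)"
    proof cases
      case 1
      have "fst y \<le> tdeg (add_mset x t)" unfolding 1 td using a(1) by (rule trans_le_add1)
      moreover have "snd y \<le> tdeg (add_mset x t)" unfolding 1 td using a(2) by (rule trans_le_add1)
      ultimately show ?thesis ..
    next
      case 2 then have "fst y \<le> tdeg t \<and> snd y \<le> tdeg t" using IH(2) by blast
      then show ?thesis using td by linarith
    qed
  qed
  ultimately show ?case by blast
qed

lemma finite_types: "finite (types_of_deg d)"
proof -
  let ?A = "{1..d} \<times> {1..d}"
  have "types_of_deg d \<subseteq> mset ` {xs. set xs \<subseteq> ?A \<and> length xs \<le> d}"
  proof
    fix t assume "t \<in> types_of_deg d"
    then have it: "is_type t" and td: "tdeg t = d" by (simp_all add: types_of_deg_def)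
    have b: "size t \<le> d" "\<forall>x\<in>#t. fst x \<le> d \<and> snd x \<le> d" using type_bounds[OF it] td by simp_all
    have "\<forall>x\<in>#t. 1 \<le> fst x \<and> 1 \<le> snd x" using it unfolding is_type_def by (auto simp: case_prod_beta)
    then have "set (sorted_list_of_multiset t) \<subseteq> ?A"
    proof -
      assume h: "\<forall>x\<in>#t. 1 \<le> fst x \<and> 1 \<le> snd x"
      show ?thesis
      proof
        fix x assume "x \<in> set (sorted_list_of_multiset t)"
        then have xt: "x \<in># t" by simp
        have "fst x \<le> d \<and> snd x \<le> d" using b(2) xt by blast
        moreover have "1 \<le> fst x \<and> 1 \<le> snd x" using h xt by blast
        ultimately show "x \<in> ?A" by (simp add: mem_Times_iff)
      qed
    qed
    moreover have "length (sorted_list_of_multiset t) \<le> d" using b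
      by (metis mset_sorted_list_of_multiset size_mset)
    ultimately show "t \<in> mset ` {xs. set xs \<subseteq> ?A \<and> length xs \<le> d}"
      by (metis (mono_tags, lifting) image_eqI mem_Collect_eq mset_sorted_list_of_multiset)
  qed
  moreover have "finite (mset ` {xs. set xs \<subseteq> ?A \<and> length xs \<le> d})"
    by (intro finite_imageI finite_lists_length_le) simp
  ultimately show ?thesis by (rule finite_subset)
qed

lemma PP_value:
  assumes "is_type l"
  shows "PP Q (sorted_list_of_multiset l) m =
    (if valid_mono m then int (card (arrQ Q (sorted_list_of_multiset (mtype m)) (sorted_list_of_multiset l))) else 0)"
proof (cases "valid_mono m")
  case True
  have vK: "\<forall>v\<in>Poly_Mapping.keys m. 1 \<le> fst v \<and> 1 \<le> snd v"
    using True unfolding valid_mono_def by (auto simp: case_prod_beta)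
  have "PP Q (sorted_list_of_multiset l) m =
      int (card (ArrK Q (Poly_Mapping.keys m) (Poly_Mapping.lookup m) (sorted_list_of_multiset l)))"
    by (rule PP_main[OF pos_of_type[OF assms] finite_keys vK]) simp
  also have "\<dots> = int (card (arrQ Q (map (\<lambda>v. (fst v, Poly_Mapping.lookup m v))
       (sorted_list_of_set (Poly_Mapping.keys m))) (sorted_list_of_multiset l)))"
    by (simp add: ArrK_arrQ)
  also have "\<dots> = int (card (arrQ Q (sorted_list_of_multiset (mtype m)) (sorted_list_of_multiset l)))"
    by (rule arg_cong[where f=int], rule card_perm) (simp_all only: mtype_mset mset_sorted_list_of_multiset)
  finally show ?thesis using True by simp
next
  case False
  then show ?thesis using PP_invalid[OF pos_of_type[OF assms]] by simp
qed

lemma final_gen: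
  assumes il: "is_type l" and dl: "tdeg l = d"
  shows "PP Q (sorted_list_of_multiset l) =
    (\<lambda>m. \<Sum>t \<in> types_of_deg d. int (card (arrQ Q (sorted_list_of_multiset t) (sorted_list_of_multiset l))) * Mt t m)"
proof
  fix m
  let ?c = "\<lambda>t. int (card (arrQ Q (sorted_list_of_multiset t) (sorted_list_of_multiset l)))"
  show "PP Q (sorted_list_of_multiset l) m = (\<Sum>t \<in> types_of_deg d. ?c t * Mt t m)"
  proof (cases "valid_mono m")
    case True
    have "(\<Sum>t \<in> types_of_deg d. ?c t * Mt t m) = (\<Sum>t \<in> types_of_deg d. if mtype m = t then ?c t else 0)"
      by (intro sum.cong refl) (simp add: Mt_def True)
    also have "\<dots> = (if mtype m \<in> types_of_deg d then ?c (mtype m) else 0)"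
      by (rule sum.delta'[OF finite_types])
    also have "\<dots> = ?c (mtype m)"
    proof (cases "mtype m \<in> types_of_deg d")
      case False
      have "arrQ Q (sorted_list_of_multiset (mtype m)) (sorted_list_of_multiset l) = {}"
      proof (rule equals0I)
        fix A assume "A \<in> arrQ Q (sorted_list_of_multiset (mtype m)) (sorted_list_of_multiset l)"
        then have "A \<in> arrangements (sorted_list_of_multiset (mtype m)) (sorted_list_of_multiset l)"
          by (simp add: arrQ_def)
        from arr_deg[OF this] have "tdeg (mtype m) = d" using dl by simp
        then have "mtype m \<in> types_of_deg d" using is_type_mtype[OF True] by (simp add: types_of_deg_def)
        with False show False by simp
      qed
      then show ?thesis using False by simp
    qed simp
    finally show ?thesis using PP_value[OF il] True by simp
  next
    case False
    then show ?thesis using PP_value[OF il] by (simp add: Mt_def)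
  qed
qed

theorem theorem4:
  fixes l :: "(nat \<times> nat) multiset" and d :: nat
  assumes "is_type l" and "tdeg l = d"
  shows "Hlam l = (\<lambda>m. \<Sum>t \<in> types_of_deg d. int (acount t l) * Mt t m)
    \<and> Elam l = (\<lambda>m. \<Sum>t \<in> types_of_deg d. int (ecount t l) * Mt t m)
    \<and> (\<forall>t \<in> types_of_deg d. acount t l = acount (ttrans l) (ttrans t)
                              \<and> ecount t l = ecount (ttrans l) (ttrans t))
    \<and> (\<forall>t \<in> types_of_deg d. \<forall>ts ls. mset ts = t \<and> mset ls = l \<longrightarrow>
           bij_betw mtransp (arrangements ts ls)
             (arrangements (map (\<lambda>(b, m). (m, b)) ls) (map (\<lambda>(b, m). (m, b)) ts))
         \<and> bij_betw mtransp (arrangements01 ts ls)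
             (arrangements01 (map (\<lambda>(b, m). (m, b)) ls) (map (\<lambda>(b, m). (m, b)) ts)))"
proof (intro conjI)
  have ac: "acount t l = card (arrQ (\<lambda>_. True) (sorted_list_of_multiset t) (sorted_list_of_multiset l))" for t l
    by (simp add: acount_def arrQ_True)
  have ec: "ecount t l = card (arrQ (\<lambda>e. e = 1) (sorted_list_of_multiset t) (sorted_list_of_multiset l))" for t l
    by (simp only: ecount_def arrQ_01)
  show "Hlam l = (\<lambda>m. \<Sum>t \<in> types_of_deg d. int (acount t l) * Mt t m)"
    unfolding Hlam_PP ac by (rule final_gen[OF assms])
  show "Elam l = (\<lambda>m. \<Sum>t \<in> types_of_deg d. int (ecount t l) * Mt t m)"
    unfolding Elam_PP ec by (rule final_gen[OF assms])
  have tr: "card (arrQ Q (sorted_list_of_multiset t) (sorted_list_of_multiset l))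
      = card (arrQ Q (sorted_list_of_multiset (ttrans l)) (sorted_list_of_multiset (ttrans t)))" for Q t l
  proof -
    have "card (arrQ Q (sorted_list_of_multiset t) (sorted_list_of_multiset l))
        = card (arrQ Q (sw (sorted_list_of_multiset l)) (sw (sorted_list_of_multiset t)))"
      by (rule bij_betw_same_card[OF bij_mtransp])
    also have "\<dots> = card (arrQ Q (sorted_list_of_multiset (ttrans l)) (sorted_list_of_multiset (ttrans t)))"
      by (rule card_perm) (simp_all add: ttrans_def)
    finally show ?thesis .
  qed
  show "\<forall>t \<in> types_of_deg d. acount t l = acount (ttrans l) (ttrans t) \<and> ecount t l = ecount (ttrans l) (ttrans t)"
    using tr by (simp add: ac ec)
  show "\<forall>t \<in> types_of_deg d. \<forall>ts ls. mset ts = t \<and> mset ls = l \<longrightarrow>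
           bij_betw mtransp (arrangements ts ls)
             (arrangements (map (\<lambda>(b, m). (m, b)) ls) (map (\<lambda>(b, m). (m, b)) ts))
         \<and> bij_betw mtransp (arrangements01 ts ls)
             (arrangements01 (map (\<lambda>(b, m). (m, b)) ls) (map (\<lambda>(b, m). (m, b)) ts))"
  proof -
    have b1: "bij_betw mtransp (arrangements ts ls) (arrangements (sw ls) (sw ts))" for ts ls
      using bij_mtransp[of "\<lambda>_. True" ts ls] unfolding arrQ_True .
    have b2: "bij_betw mtransp (arrangements01 ts ls) (arrangements01 (sw ls) (sw ts))" for ts ls
      using bij_mtransp[of "\<lambda>e. e = 1" ts ls] unfolding arrQ_01 .
    show ?thesis using b1 b2 by blast
  qed
qed


end
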